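(* Let $\mathcal{Q}$ be a set of generalized quantifiers of width $1$, $d\in\mathbb{N}$, and $(\mathfrak{M},w)$, $(\mathfrak{N},v)$ pointed Kripke models. If $\mathfrak{N},v\Vdash\varphi^{\mathcal{Q},d}_{\mathfrak{M}\sqcup\mathfrak{N},w}$, then $\mathfrak{M},w\sim^d_{\mathcal{Q}}\mathfrak{N},v$.
   Context: Kripke models: fix a finite set $\Phi$ of proposition symbols. A Kripke model is $\mathfrak{M}=(V,E,\ell)$ with $V$ a finite non-empty set, $E\subseteq V\times V$, and $\ell:V\to\mathcal{P}(\Phi)$. For $u\in V$, $N(u)=\{u'\mid (u,u')\in E\}$. A pointed Kripke model is $(\mathfrak{M},w)$ with $w\in V$; $\mathfrak{M}\sqcup\mathfrak{N}$ is the disjoint union. A generalized quantifier (of width 1) is a class $Q$ of pairs $(D,P)$ with $P\subseteq D$, closed under isomorphism; $\mathfrak{M},u\Vdash\langle Q\rangle\varphi$ iff $(N(u),\{u'\in N(u)\mid \mathfrak{M},u'\Vdash\varphi\})\in Q$. $\mathrm{PL}(\mathcal{Q})$: formulas $\varphi::=\bot\mid p\mid\neg\varphi\mid\varphi\wedge\varphi\mid\varphi\vee\varphi\mid\langle Q\rangle\varphi$, usual Boolean semantics, $\mathfrak{M},u\Vdash p$ iff $p\in\ell(u)$; $\equiv^d_{\mathrm{PL}(\mathcal{Q})}$ is indistinguishability by formulas of modal depth $\le d$. Types: for a Kripke model $\mathfrak{K}$ and $u\in\mathfrak{K}$, $\varphi^{\mathcal{Q},0}_{\mathfrak{K},u}=\bigwedge\{p\mid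 \mathfrak{K},u\Vdash p\}\wedge\bigwedge\{\neg p\mid \mathfrak{K},u\Vdash\neg p\}$, and $\varphi^{\mathcal{Q},d+1}_{\mathfrak{K},u}$ is the conjunction of $\varphi^{\mathcal{Q},0}_{\mathfrak{K},u}$, of all $\langle Q\rangle\bigvee_{\psi\in C}\psi$ true at $(\mathfrak{K},u)$, and of all $\neg\langle Q\rangle\bigvee_{\psi\in C}\psi$ true at $(\mathfrak{K},u)$, where $Q$ ranges over $\mathcal{Q}$ and $C$ over subsets of $\{\varphi^{\mathcal{Q},d}_{\mathfrak{K},u'}\mid u'\in\mathfrak{K}\}$ (infinitary conjunctions allowed if $\mathcal{Q}$ is infinite; satisfied iff every conjunct is). $\mathcal{Q}$-bisimulation game on $(\mathfrak{M},w)$, $(\mathfrak{N},v)$: two pebbles start on $w$ and $v$; Player 1 starts as attacker, Player 2 as defender (roles may swap). At the start of a round the pebbles lie on nodes $a,b$ of $\mathfrak{M}\sqcup\mathfrak{N}$. (i) The attacker selects one pebble, say on $a$, a $Q\in\mathcal{Q}$, and $X\subseteq N(a)$ with $(N(a),X)\in Q$; then chooses $P\subseteq N(b)$. The defender may contest $P$ by placing one pebble on a node of $P$ and the other on a node of $N(a)$; a new round starts. (ii) Otherwise the defender chooses $X'\subseteq N(b)$ with $(N(b),X')\in Q$ and $P\subseteq X'$. (iii) The attacker either moves one pebble onto a node of $N(b)\setminus X'$ and the other onto a node of $X$ and the players swap roles, or moves one pebble onto a node of $X'$, after which the defender moves the other onto a node of $X\cup P$; a new round starts. (iv) Whenever $X$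 (resp. $X'$) is chosen, the other player may contest it by moving one pebble onto a node of that set and the other onto a node of $N(a)\setminus X$ (resp. $N(b)\setminus X'$), then taking the role of defender; a new round starts. The current attacker wins if at the start of a round the pebbled nodes disagree on some proposition symbol; a player who must choose a subset but cannot loses; infinite plays are won by Player 2. In the $d$-round game Player 2 wins if Player 1 has not won after $d$ rounds; $\mathfrak{M},w\sim^d_{\mathcal{Q}}\mathfrak{N},v$ means Player 2 has a winning strategy in it. *)

theory Defs
  imports Main
begin

record ('v, 'p) kripke =
  V   :: "'v set"
  Ed  :: "('v \<times> 'v) set"
  lab :: "'v \<Rightarrow> 'p set"

definition kripke_model :: "'p set \<Rightarrow> ('v, 'p) kripke \<Rightarrow> bool" where
  "kripke_model Phi K \<longleftrightarrow> finite (V K) \<and> V K \<noteq> {} \<and> Ed K \<subseteq> V K \<times> V K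
     \<and> (\<forall>u\<in>V K. lab K u \<subseteq> Phi)"

definition nbr :: "('v, 'p) kripke \<Rightarrow> 'v \<Rightarrow> 'v set" where
  "nbr K u = {u'. (u, u') \<in> Ed K}"

definition dunion :: "('a, 'p) kripke \<Rightarrow> ('b, 'p) kripke \<Rightarrow> ('a + 'b, 'p) kripke" where
  "dunion M N = \<lparr> V = Inl ` V M \<union> Inr ` V N,
                  Ed = map_prod Inl Inl ` Ed M \<union> map_prod Inr Inr ` Ed N,
                  lab = case_sum (lab M) (lab N) \<rparr>"

text \<open>An isomorphism-closed class of pairs (D,P), P \<subseteq> D.  Since all Kripke models
  are finite, only finite D matter, and on finite structures such a class is
  determined exactly by the set of pairs (|D|,|P|) it contains.\<close>
type_synonym gq = "(nat \<times> nat) set"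

definition inQ :: "gq \<Rightarrow> 'v set \<Rightarrow> 'v set \<Rightarrow> bool" where
  "inQ Q D P \<longleftrightarrow> P \<subseteq> D \<and> (card D, card P) \<in> Q"

definition holdsQ :: "gq \<Rightarrow> ('v, 'p) kripke \<Rightarrow> 'v \<Rightarrow> ('v \<Rightarrow> bool) \<Rightarrow> bool" where
  "holdsQ Q K u psi \<longleftrightarrow> inQ Q (nbr K u) {u' \<in> nbr K u. psi u'}"

text \<open>sat_type Phi Qs d K u X x  means  X, x satisfies the type phi^{Qs,d}_{K,u}.
  This is the literal unfolding of the satisfaction of the (possibly infinitary)
  conjunction: the depth-0 part says x agrees with u on every proposition of Phi;
  the depth-(d+1) part says that, for every Q in Qs and every set C of depth-d types
  of nodes of K (C given as the types of the nodes in a set U of nodes of K),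
  <Q> (OR C) holds at x in X iff it holds at u in K.\<close>
fun self_type :: "'p set \<Rightarrow> gq set \<Rightarrow> nat \<Rightarrow> ('v, 'p) kripke \<Rightarrow> 'v \<Rightarrow> 'v \<Rightarrow> bool" where
  "self_type Phi Qs 0 K u x = (\<forall>p\<in>Phi. p \<in> lab K x \<longleftrightarrow> p \<in> lab K u)"
| "self_type Phi Qs (Suc d) K u x =
     ((\<forall>p\<in>Phi. p \<in> lab K x \<longleftrightarrow> p \<in> lab K u) \<and>
      (\<forall>Q\<in>Qs. \<forall>U. U \<subseteq> V K \<longrightarrow>
         (holdsQ Q K x (\<lambda>y. \<exists>u'\<in>U. self_type Phi Qs d K u' y)
          \<longleftrightarrow> holdsQ Q K u (\<lambda>y. \<exists>u'\<in>U. self_type Phi Qs d K u' y))))"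

text \<open>Same notion when the evaluation model X may differ from K (HOL forbids
  polymorphic recursion, so truth of the type conjuncts inside K itself is
  computed by self_type, which is sat_type with X = K).\<close>
fun sat_type :: "'p set \<Rightarrow> gq set \<Rightarrow> nat \<Rightarrow> ('v, 'p) kripke \<Rightarrow> 'v \<Rightarrow> ('w, 'p) kripke \<Rightarrow> 'w \<Rightarrow> bool" where
  "sat_type Phi Qs 0 K u X x = (\<forall>p\<in>Phi. p \<in> lab X x \<longleftrightarrow> p \<in> lab K u)"
| "sat_type Phi Qs (Suc d) K u X x =
     ((\<forall>p\<in>Phi. p \<in> lab X x \<longleftrightarrow> p \<in> lab K u) \<and>
      (\<forall>Q\<in>Qs. \<forall>U. U \<subseteq> V K \<longrightarrow>
         (holdsQ Q X x (\<lambda>y. \<exists>u'\<in>U. sat_type Phi Qs d K u' X y)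
          \<longleftrightarrow> holdsQ Q K u (\<lambda>y. \<exists>u'\<in>U. self_type Phi Qs d K u' y))))"

text \<open>Moves: pick isP2 S f -- the mover chooses s in S; if the mover is Player 2 she
  needs one good choice, if Player 1 every choice must be good for Player 2.
  A mover without an available choice loses.  alt is a binary choice.\<close>
definition pick :: "bool \<Rightarrow> 'x set \<Rightarrow> ('x \<Rightarrow> bool) \<Rightarrow> bool" where
  "pick isP2 S f = (if isP2 then (\<exists>s\<in>S. f s) else (\<forall>s\<in>S. f s))"

definition alt :: "bool \<Rightarrow> bool \<Rightarrow> bool \<Rightarrow> bool" where
  "alt isP2 A B = (if isP2 then A \<or> B else A \<and> B)"

text \<open>One round at pebble position a, b in model K.  t = True iff Player 2 is the
  current attacker.  W x y t' = Player 2 wins the rest of the game from the new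
  round with pebbles on x, y and role flag t'.\<close>
definition game_round :: "gq set \<Rightarrow> ('v, 'p) kripke \<Rightarrow> ('v \<Rightarrow> 'v \<Rightarrow> bool \<Rightarrow> bool)
    \<Rightarrow> 'v \<Rightarrow> 'v \<Rightarrow> bool \<Rightarrow> bool" where
  "game_round Qs K W a b t =
    pick t {(a', b', Q, X). (a', b') \<in> {(a, b), (b, a)} \<and> Q \<in> Qs \<and> X \<subseteq> nbr K a'
                            \<and> inQ Q (nbr K a') X}
     (\<lambda>(a', b', Q, X).
       alt (\<not> t)
         \<comment> \<open>(iv) defender contests X\<close>
         (pick (\<not> t) {(x, y). x \<in> X \<and> y \<in> nbr K a' - X} (\<lambda>(x, y). W x y t))
         \<comment> \<open>(i) attacker chooses P\<close>
         (pick t {P. P \<subseteq> nbr K b'} (\<lambda>P.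
            alt (\<not> t)
              \<comment> \<open>(i) defender contests P\<close>
              (pick (\<not> t) {(p, y). p \<in> P \<and> y \<in> nbr K a'} (\<lambda>(p, y). W p y t))
              \<comment> \<open>(ii) defender chooses X'\<close>
              (pick (\<not> t) {X'. X' \<subseteq> nbr K b' \<and> inQ Q (nbr K b') X' \<and> P \<subseteq> X'} (\<lambda>X'.
                 alt t
                   \<comment> \<open>(iv) attacker contests X', roles swap\<close>
                   (pick t {(x, y). x \<in> X' \<and> y \<in> nbr K b' - X'} (\<lambda>(x, y). W x y (\<not> t)))
                   (alt t
                     \<comment> \<open>(iii) first option, roles swap\<close>
                     (pick t {(n, x). n \<in> nbr K b' - X' \<and> x \<in> X} (\<lambda>(n, x). W n x (\<not> t)))
                     \<comment> \<open>(iii) second option\<close>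
                     (pick t X' (\<lambda>x'. pick (\<not> t) (X \<union> P) (\<lambda>z. W x' z t)))))))))"

text \<open>win2 Qs K k a b t: Player 2 has a winning strategy in the k-round game from
  pebbles on a, b with role flag t.\<close>
primrec win2 :: "gq set \<Rightarrow> ('v, 'p) kripke \<Rightarrow> nat \<Rightarrow> 'v \<Rightarrow> 'v \<Rightarrow> bool \<Rightarrow> bool" where
  "win2 Qs K 0 a b t = (if lab K a \<noteq> lab K b then t else True)"
| "win2 Qs K (Suc k) a b t =
     (if lab K a \<noteq> lab K b then t else game_round Qs K (win2 Qs K k) a b t)"

text \<open>M, w ~^d_Qs N, v: Player 2 (initially the defender) wins the d-round game
  played on the disjoint union, pebbles starting on w and v.\<close>
definition game_equiv :: "gq set \<Rightarrow> nat \<Rightarrow> ('a, 'p) kripke \<Rightarrow> 'a \<Rightarrow> ('b, 'p) kripke \<Rightarrow> 'b \<Rightarrow> bool" where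
  "game_equiv Qs d M w N v = win2 Qs (dunion M N) d (Inl w) (Inr v) False"

end

theory Submission imports Defs begin
lemma round_F: "game_round Qs K W a b False \<longleftrightarrow> (\<forall>a' b' Q X. (a',b') \<in> {(a,b),(b,a)} \<and> Q\<in>Qs \<and> X \<subseteq> nbr K a' \<and> inQ Q (nbr K a') X \<longrightarrow>
  ((\<exists>x\<in>X. \<exists>y\<in>nbr K a' - X. W x y False) \<or>
   (\<forall>P. P \<subseteq> nbr K b' \<longrightarrow> ((\<exists>p\<in>P. \<exists>y\<in>nbr K a'. W p y False) \<or>
     (\<exists>X'. X' \<subseteq> nbr K b' \<and> inQ Q (nbr K b') X' \<and> P \<subseteq> X' \<and>
        (\<forall>x y. x \<in> X' \<and> y \<in> nbr K b' \<and> y \<notin> X' \<longrightarrow> W x y True) \<and> 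
        (\<forall>n x. n \<in> nbr K b' \<and> n \<notin> X' \<and> x \<in> X \<longrightarrow> W n x True) \<and>
        (\<forall>x'\<in>X'. \<exists>z\<in>X\<union>P. W x' z False))))))"
  unfolding game_round_def pick_def alt_def by (simp add: Bex_def Ball_def)
lemma round_T: "game_round Qs K W a b True \<longleftrightarrow> (\<exists>a' b'. (a',b') \<in> {(a,b),(b,a)} \<and> (\<exists>Q\<in>Qs. \<exists>X. X \<subseteq> nbr K a' \<and> inQ Q (nbr K a') X \<and>
  ((\<forall>x y. x\<in>X \<and> y\<in>nbr K a' \<and> y \<notin> X \<longrightarrow> W x y True) \<and>
   (\<exists>P. P \<subseteq> nbr K b' \<and> ((\<forall>p y. p\<in>P \<and> y\<in>nbr K a' \<longrightarrow> W p y True) \<and>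
     (\<forall>X'. X' \<subseteq> nbr K b' \<and> inQ Q (nbr K b') X' \<and> P \<subseteq> X' \<longrightarrow>
        (\<exists>x\<in>X'. \<exists>y\<in>nbr K b' - X'. W x y False) \<or> (\<exists>n\<in>nbr K b' - X'. \<exists>x\<in>X. W n x False) \<or>
        (\<exists>x'\<in>X'. \<forall>z\<in>X\<union>P. W x' z True)))))))"
  unfolding game_round_def pick_def alt_def by (simp add: Bex_def Ball_def)
lemma st_refl: "self_type Phi Qs k K u u" by (cases k) auto
lemma st_sym: "self_type Phi Qs k K u x \<Longrightarrow> self_type Phi Qs k K x u" by (cases k) auto
lemma st_trans: "self_type Phi Qs k K u x \<Longrightarrow> self_type Phi Qs k K x y \<Longrightarrow> self_type Phi Qs k K u y"
  by (cases k) auto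

lemma main:
  assumes edges: "Ed K \<subseteq> V K \<times> V K" and labs: "\<forall>u\<in>V K. lab K u \<subseteq> Phi"
  shows "a \<in> V K \<Longrightarrow> b \<in> V K \<Longrightarrow> (self_type Phi Qs k K a b \<longrightarrow> win2 Qs K k a b False)
     \<and> (\<not> self_type Phi Qs k K a b \<longrightarrow> win2 Qs K k a b True)"
proof (induction k arbitrary: a b)
  case 0
  have "self_type Phi Qs 0 K a b \<Longrightarrow> lab K a = lab K b"
    using labs 0 by auto
  then show ?case by auto
next
  case (Suc k)
  let ?E = "self_type Phi Qs k K"
  have nbrV: "\<And>u. nbr K u \<subseteq> V K" using edges unfolding nbr_def by auto
  have IHA: "\<And>x y. x \<in> V K \<Longrightarrow> y \<in> V K \<Longrightarrow> ?E x y \<Longrightarrow> win2 Qs K k x y False"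
    using Suc.IH by blast
  have IHB: "\<And>x y. x \<in> V K \<Longrightarrow> y \<in> V K \<Longrightarrow> \<not> ?E x y \<Longrightarrow> win2 Qs K k x y True"
    using Suc.IH by blast
  have sym: "\<And>x y. ?E x y \<Longrightarrow> ?E y x" by (rule st_sym)
  have trans: "\<And>x y z. ?E x y \<Longrightarrow> ?E y z \<Longrightarrow> ?E x z" by (rule st_trans)
  have refl: "\<And>x. ?E x x" by (rule st_refl)
  have labeq: "(\<forall>p\<in>Phi. p \<in> lab K b \<longleftrightarrow> p \<in> lab K a) \<longleftrightarrow> lab K a = lab K b"
    using labs Suc.prems by auto
  show ?case
  proof (intro conjI impI)
    assume st: "self_type Phi Qs (Suc k) K a b"
    hence le: "lab K a = lab K b" using labeq by simp
    have stab: "\<And>a' b'. (a',b') \<in> {(a,b),(b,a)} \<Longrightarrow> self_type Phi Qs (Suc k) K a' b'"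
      using st st_sym[of Phi Qs "Suc k" K a b] by auto
    have "game_round Qs K (win2 Qs K k) a b False"
      unfolding round_F
    proof (intro allI impI)
      fix a' b' Q X
      assume h: "(a', b') \<in> {(a, b), (b, a)} \<and> Q \<in> Qs \<and> X \<subseteq> nbr K a' \<and> inQ Q (nbr K a') X"
      have a'V: "a' \<in> V K" and b'V: "b' \<in> V K" using h Suc.prems by auto
      have st': "self_type Phi Qs (Suc k) K a' b'" using stab h by blast
      show "(\<exists>x\<in>X. \<exists>y\<in>nbr K a' - X. win2 Qs K k x y False) \<or>
   (\<forall>P. P \<subseteq> nbr K b' \<longrightarrow> ((\<exists>p\<in>P. \<exists>y\<in>nbr K a'. win2 Qs K k p y False) \<or>
     (\<exists>X'. X' \<subseteq> nbr K b' \<and> inQ Q (nbr K b') X' \<and> P \<subseteq> X' \<and>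
        (\<forall>x y. x \<in> X' \<and> y \<in> nbr K b' \<and> y \<notin> X' \<longrightarrow> win2 Qs K k x y True) \<and> 
        (\<forall>n x. n \<in> nbr K b' \<and> n \<notin> X' \<and> x \<in> X \<longrightarrow> win2 Qs K k n x True) \<and>
        (\<forall>x'\<in>X'. \<exists>z\<in>X\<union>P. win2 Qs K k x' z False))))"
      proof (cases "\<exists>x\<in>X. \<exists>y\<in>nbr K a' - X. ?E x y")
        case True
        then obtain x y where xy: "x \<in> X" "y \<in> nbr K a' - X" "?E x y" by blast
        have "x \<in> V K" "y \<in> V K" using xy h nbrV by blast+
        hence "win2 Qs K k x y False" using IHA xy(3) by blast
        then show ?thesis using xy(1,2) by blast
      next
        case False
        hence closed: "\<And>x y. x \<in> X \<Longrightarrow> y \<in> nbr K a' \<Longrightarrow> ?E x y \<Longrightarrow> y \<in> X" by blast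
        show ?thesis
        proof (rule disjI2, intro allI impI)
          fix P assume P: "P \<subseteq> nbr K b'"
          show "(\<exists>p\<in>P. \<exists>y\<in>nbr K a'. win2 Qs K k p y False) \<or>
     (\<exists>X'. X' \<subseteq> nbr K b' \<and> inQ Q (nbr K b') X' \<and> P \<subseteq> X' \<and>
        (\<forall>x y. x \<in> X' \<and> y \<in> nbr K b' \<and> y \<notin> X' \<longrightarrow> win2 Qs K k x y True) \<and> 
        (\<forall>n x. n \<in> nbr K b' \<and> n \<notin> X' \<and> x \<in> X \<longrightarrow> win2 Qs K k n x True) \<and>
        (\<forall>x'\<in>X'. \<exists>z\<in>X\<union>P. win2 Qs K k x' z False))"
          proof (cases "\<exists>p\<in>P. \<exists>y\<in>nbr K a'. ?E p y")
            case True
            then obtain p y where py: "p \<in> P" "y \<in> nbr K a'" "?E p y" by blast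
            have "p \<in> V K" "y \<in> V K" using py P nbrV by blast+
            hence "win2 Qs K k p y False" using IHA py(3) by blast
            then show ?thesis using py(1,2) by blast
          next
            case False
            hence unm: "\<And>p y. p \<in> P \<Longrightarrow> y \<in> nbr K a' \<Longrightarrow> \<not> ?E p y" by blast
            define U where "U = X \<union> P"
            define X' where "X' = {y \<in> nbr K b'. \<exists>u\<in>U. ?E u y}"
            have UV: "U \<subseteq> V K" using h P nbrV unfolding U_def by blast
            have eqa: "{y \<in> nbr K a'. \<exists>u\<in>U. ?E u y} = X"
            proof
              show "{y \<in> nbr K a'. \<exists>u\<in>U. ?E u y} \<subseteq> X"
                using closed unm sym unfolding U_def by blast
              show "X \<subseteq> {y \<in> nbr K a'. \<exists>u\<in>U. ?E u y}"
                using h refl unfolding U_def by blast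
            qed
            have hq: "holdsQ Q K b' (\<lambda>y. \<exists>u\<in>U. ?E u y) \<longleftrightarrow> holdsQ Q K a' (\<lambda>y. \<exists>u\<in>U. ?E u y)"
            proof -
              have "\<forall>Q\<in>Qs. \<forall>U. U \<subseteq> V K \<longrightarrow> (holdsQ Q K b' (\<lambda>y. \<exists>u\<in>U. ?E u y) \<longleftrightarrow> holdsQ Q K a' (\<lambda>y. \<exists>u\<in>U. ?E u y))"
                using st' by (simp only: self_type.simps) (rule conjunct2)
              then show ?thesis using h UV by blast
            qed
            have inX': "inQ Q (nbr K b') X'"
              using hq h eqa unfolding holdsQ_def X'_def by simp
            have c1: "\<forall>x y. x \<in> X' \<and> y \<in> nbr K b' \<and> y \<notin> X' \<longrightarrow> win2 Qs K k x y True"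
            proof (intro allI impI)
              fix x y assume xy: "x \<in> X' \<and> y \<in> nbr K b' \<and> y \<notin> X'"
              have "\<not> ?E x y" using xy trans unfolding X'_def by blast
              moreover have "x \<in> V K" "y \<in> V K" using xy nbrV unfolding X'_def by blast+
              ultimately show "win2 Qs K k x y True" using IHB by blast
            qed
            have c2: "\<forall>n x. n \<in> nbr K b' \<and> n \<notin> X' \<and> x \<in> X \<longrightarrow> win2 Qs K k n x True"
            proof (intro allI impI)
              fix n x assume nx: "n \<in> nbr K b' \<and> n \<notin> X' \<and> x \<in> X"
              have "\<not> ?E n x" using nx sym unfolding X'_def U_def by blast
              moreover have "n \<in> V K" "x \<in> V K" using nx nbrV h by blast+
              ultimately show "win2 Qs K k n x True" using IHB by blast
            qed
            have c3: "\<forall>x'\<in>X'. \<exists>z\<in>X\<union>P. win2 Qs K k x' z False"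
            proof
              fix x' assume x': "x' \<in> X'"
              then obtain u where u: "u \<in> U" "?E u x'" unfolding X'_def by blast
              have "x' \<in> V K" "u \<in> V K" using u x' UV nbrV unfolding X'_def by blast+
              moreover have "?E x' u" using sym u(2) by blast
              ultimately have "win2 Qs K k x' u False" using IHA by blast
              then show "\<exists>z\<in>X\<union>P. win2 Qs K k x' z False" using u unfolding U_def by blast
            qed
            have "X' \<subseteq> nbr K b'" "P \<subseteq> X'" using P refl unfolding X'_def U_def by auto
            then have "X' \<subseteq> nbr K b' \<and> inQ Q (nbr K b') X' \<and> P \<subseteq> X' \<and>
        (\<forall>x y. x \<in> X' \<and> y \<in> nbr K b' \<and> y \<notin> X' \<longrightarrow> win2 Qs K k x y True) \<and> 
        (\<forall>n x. n \<in> nbr K b' \<and> n \<notin> X' \<and> x \<in> X \<longrightarrow> win2 Qs K k n x True) \<and>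
        (\<forall>x'\<in>X'. \<exists>z\<in>X\<union>P. win2 Qs K k x' z False)" using inX' c1 c2 c3 by (intro conjI) assumption+
            then show ?thesis by (intro disjI2 exI[of _ X']) assumption
          qed
        qed
      qed
    qed
    then show "win2 Qs K (Suc k) a b False" using le by simp
  next
    assume nst: "\<not> self_type Phi Qs (Suc k) K a b"
    show "win2 Qs K (Suc k) a b True"
    proof (cases "lab K a = lab K b")
      case False then show ?thesis by simp
    next
      case True
      then obtain Q U where QU: "Q \<in> Qs" "U \<subseteq> V K"
        "\<not> (holdsQ Q K b (\<lambda>y. \<exists>u\<in>U. ?E u y) \<longleftrightarrow> holdsQ Q K a (\<lambda>y. \<exists>u\<in>U. ?E u y))"
        using nst labeq by auto
      define \<phi> where "\<phi> = (\<lambda>y. \<exists>u\<in>U. ?E u y)"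
      obtain a' b' where ab: "(a',b') \<in> {(a,b),(b,a)}" "holdsQ Q K a' \<phi>" "\<not> holdsQ Q K b' \<phi>"
        using QU unfolding \<phi>_def by blast
      have a'V: "a' \<in> V K" and b'V: "b' \<in> V K" using ab Suc.prems by auto
      have phicl: "\<And>x y. \<phi> x \<Longrightarrow> ?E x y \<Longrightarrow> \<phi> y" unfolding \<phi>_def using trans by blast
      define X where "X = {y \<in> nbr K a'. \<phi> y}"
      define P where "P = {y \<in> nbr K b'. \<phi> y \<and> (\<forall>x\<in>nbr K a'. \<not> ?E x y)}"
      define Y where "Y = {y \<in> nbr K b'. \<phi> y}"
      have XQ: "inQ Q (nbr K a') X" using ab unfolding holdsQ_def X_def by simp
      have YQ: "\<not> inQ Q (nbr K b') Y" using ab unfolding holdsQ_def Y_def by simp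
      have "game_round Qs K (win2 Qs K k) a b True"
        unfolding round_T
      proof (intro exI conjI bexI)
        show "(a',b') \<in> {(a,b),(b,a)}" by (rule ab(1))
        show "Q \<in> Qs" by (rule QU(1))
        show "X \<subseteq> nbr K a'" unfolding X_def by auto
        show "inQ Q (nbr K a') X" by (rule XQ)
        show "P \<subseteq> nbr K b'" unfolding P_def by auto
        show "\<forall>x y. x\<in>X \<and> y\<in>nbr K a' \<and> y \<notin> X \<longrightarrow> win2 Qs K k x y True"
        proof (intro allI impI)
          fix x y assume xy: "x\<in>X \<and> y\<in>nbr K a' \<and> y \<notin> X"
          have "\<not> ?E x y" using xy phicl unfolding X_def by blast
          then show "win2 Qs K k x y True" using IHB xy nbrV unfolding X_def by blast
        qed
        show "\<forall>p y. p\<in>P \<and> y\<in>nbr K a' \<longrightarrow> win2 Qs K k p y True"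
        proof (intro allI impI)
          fix p y assume py: "p\<in>P \<and> y\<in>nbr K a'"
          have "\<not> ?E p y" using py sym unfolding P_def by blast
          then show "win2 Qs K k p y True" using IHB py nbrV unfolding P_def by blast
        qed
        show "\<forall>X'. X' \<subseteq> nbr K b' \<and> inQ Q (nbr K b') X' \<and> P \<subseteq> X' \<longrightarrow>
        (\<exists>x\<in>X'. \<exists>y\<in>nbr K b' - X'. win2 Qs K k x y False) \<or> (\<exists>n\<in>nbr K b' - X'. \<exists>x\<in>X. win2 Qs K k n x False) \<or>
        (\<exists>x'\<in>X'. \<forall>z\<in>X\<union>P. win2 Qs K k x' z True)"
        proof (intro allI impI)
          fix X' assume X': "X' \<subseteq> nbr K b' \<and> inQ Q (nbr K b') X' \<and> P \<subseteq> X'"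
          have ne: "X' \<noteq> Y" using X' YQ by auto
          show "(\<exists>x\<in>X'. \<exists>y\<in>nbr K b' - X'. win2 Qs K k x y False) \<or> (\<exists>n\<in>nbr K b' - X'. \<exists>x\<in>X. win2 Qs K k n x False) \<or>
        (\<exists>x'\<in>X'. \<forall>z\<in>X\<union>P. win2 Qs K k x' z True)"
          proof (cases "\<exists>x'\<in>X'. \<not> \<phi> x'")
            case True
            then obtain x' where x': "x' \<in> X'" "\<not> \<phi> x'" by blast
            have "\<forall>z\<in>X\<union>P. win2 Qs K k x' z True"
            proof
              fix z assume z: "z \<in> X \<union> P"
              have "\<phi> z" using z unfolding X_def P_def by blast
              hence "\<not> ?E x' z" using x' phicl sym by blast
              then show "win2 Qs K k x' z True" using IHB x' X' z nbrV unfolding X_def P_def by blast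
            qed
            then show ?thesis using x' by blast
          next
            case False
            hence "X' \<subseteq> Y" using X' unfolding Y_def by blast
            then obtain y where y: "y \<in> Y" "y \<notin> X'" using ne by blast
            hence "y \<notin> P" using X' by blast
            then obtain x where x: "x \<in> nbr K a'" "?E x y" using y unfolding P_def Y_def by blast
            have "\<phi> x" using y x phicl sym unfolding Y_def by blast
            hence xX: "x \<in> X" using x unfolding X_def by blast
            have "win2 Qs K k y x False" using IHA sym x y nbrV unfolding Y_def by blast
            then show ?thesis using xX y unfolding Y_def by blast
          qed
        qed
      qed
      then show ?thesis using True by simp
    qed
  qed
qed

lemma holdsQ_Inr:
  "holdsQ Q (dunion M N) (Inr x) P \<longleftrightarrow> holdsQ Q N x (\<lambda>y. P (Inr y))"
proof -
  have nb: "nbr (dunion M N) (Inr x) = Inr ` nbr N x"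
    unfolding nbr_def dunion_def by auto
  have s: "{u' \<in> Inr ` nbr N x. P u'} = Inr ` {y \<in> nbr N x. P (Inr y)}" by auto
  have "inj Inr" by (simp add: inj_def)
  then show ?thesis unfolding holdsQ_def inQ_def nb s
    by (simp add: card_image inj_on_subset image_mono inj_image_subset_iff)
qed

lemma sat_self:
  "sat_type Phi Qs d (dunion M N) u N x \<longleftrightarrow> self_type Phi Qs d (dunion M N) u (Inr x)"
proof (induction d arbitrary: u x)
  case 0 then show ?case by (simp add: dunion_def)
next
  case (Suc d)
  show ?case by (simp add: Suc.IH holdsQ_Inr) (simp add: dunion_def)
qed

theorem lemmaB3:
  fixes Phi :: "'p set" and Qs :: "gq set" and d :: nat
    and M :: "('a, 'p) kripke" and N :: "('b, 'p) kripke" and w :: 'a and v :: 'b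
  assumes "finite Phi"
    and "kripke_model Phi M" and "kripke_model Phi N"
    and "w \<in> V M" and "v \<in> V N"
    and "sat_type Phi Qs d (dunion M N) (Inl w) N v"
  shows "game_equiv Qs d M w N v"
proof -
  let ?K = "dunion M N"
  have e: "Ed ?K \<subseteq> V ?K \<times> V ?K" using assms(2,3) unfolding kripke_model_def dunion_def by auto
  have l: "\<forall>u\<in>V ?K. lab ?K u \<subseteq> Phi" using assms(2,3) unfolding kripke_model_def dunion_def by (auto; blast)
  have "Inl w \<in> V ?K" "Inr v \<in> V ?K" using assms(4,5) unfolding dunion_def by auto
  moreover have "self_type Phi Qs d ?K (Inl w) (Inr v)" using assms(6) by (simp only: sat_self)
  ultimately show ?thesis using main[OF e l] unfolding game_equiv_def by blast
qed
end
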